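(* For an $L$-layer LISTA network at initialization (all weight entries i.i.d. $\mathcal N(0,1)$), for any $l\in[L]$ and $i\in[m]$ we have $|x_i^l|\le\ln(m)+|\sigma(0)|$ with probability at least $1-2e^{-c^l_{\mathbf x}\ln^2(m)}$ for some constant $c^l_{\mathbf x}>0$.
   Context: Fix $\lambda>0$ and $\sigma(x)=\log(1+e^{x-\lambda})-\log(1+e^{-x-\lambda})$ (componentwise), $L_\sigma$-Lipschitz. Input $\mathbf y\in\mathbb R^n$ with $|y_i|\le C_y$, initial vector $\mathbf x^0\in\mathbb R^m$ with $|x^0_i|\le C_x$. LISTA layers: $\mathbf x^l=\sigma\big(\frac1{\sqrt n}W_1^l\mathbf y+\frac1{\sqrt m}W_2^l\mathbf x^{l-1}\big)$, $l\in[L]$, with $W_1^l\in\mathbb R^{m\times n}$, $W_2^l\in\mathbb R^{m\times m}$; "at initialization" means all entries of $W_1^l,W_2^l$ are i.i.d. $\mathcal N(0,1)$. *)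

theory Defs
  imports "HOL-Probability.Probability"
begin

definition lista_sigma :: "real \<Rightarrow> real \<Rightarrow> real" where
  "lista_sigma lam x = ln (1 + exp (x - lam)) - ln (1 + exp (- x - lam))"

text \<open>Vectors in R^n / R^m are functions on indices 0..n-1 / 0..m-1.
  W1 l i j (i < m, j < n) and W2 l i j (i < m, j < m) are the entries of the
  layer-l weight matrices (layers l = 1..L).\<close>
fun lista_x :: "real \<Rightarrow> nat \<Rightarrow> nat \<Rightarrow> (nat \<Rightarrow> real) \<Rightarrow> (nat \<Rightarrow> real)
    \<Rightarrow> (nat \<Rightarrow> nat \<Rightarrow> nat \<Rightarrow> real) \<Rightarrow> (nat \<Rightarrow> nat \<Rightarrow> nat \<Rightarrow> real) \<Rightarrow> nat \<Rightarrow> nat \<Rightarrow> real" where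
  "lista_x lam m n y x0 W1 W2 0 = x0"
| "lista_x lam m n y x0 W1 W2 (Suc l) =
     (\<lambda>i. lista_sigma lam
        ((1 / sqrt (real n)) * (\<Sum>j<n. W1 (Suc l) i j * y j)
       + (1 / sqrt (real m)) * (\<Sum>j<m. W2 (Suc l) i j * lista_x lam m n y x0 W1 W2 l j)))"

text \<open>Index set of all weight entries of an L-layer network:
  Inl (l,i,j) for W1 entries, Inr (l,i,j) for W2 entries.\<close>
definition lista_index :: "nat \<Rightarrow> nat \<Rightarrow> nat \<Rightarrow> ((nat \<times> nat \<times> nat) + (nat \<times> nat \<times> nat)) set" where
  "lista_index L m n =
     Inl ` {(l, i, j). l \<in> {1..L} \<and> i < m \<and> j < n}
   \<union> Inr ` {(l, i, j). l \<in> {1..L} \<and> i < m \<and> j < m}"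

definition lista_weight :: "(nat \<Rightarrow> nat \<Rightarrow> nat \<Rightarrow> 'a \<Rightarrow> real) \<Rightarrow> (nat \<Rightarrow> nat \<Rightarrow> nat \<Rightarrow> 'a \<Rightarrow> real)
    \<Rightarrow> ((nat \<times> nat \<times> nat) + (nat \<times> nat \<times> nat)) \<Rightarrow> 'a \<Rightarrow> real" where
  "lista_weight W1 W2 k = (case k of Inl (l, i, j) \<Rightarrow> W1 l i j | Inr (l, i, j) \<Rightarrow> W2 l i j)"

definition lista_init :: "'a measure \<Rightarrow> nat \<Rightarrow> nat \<Rightarrow> nat
    \<Rightarrow> (nat \<Rightarrow> nat \<Rightarrow> nat \<Rightarrow> 'a \<Rightarrow> real) \<Rightarrow> (nat \<Rightarrow> nat \<Rightarrow> nat \<Rightarrow> 'a \<Rightarrow> real) \<Rightarrow> bool" where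
  "lista_init M L m n W1 W2 \<longleftrightarrow>
     prob_space M \<and>
     prob_space.indep_vars M (\<lambda>_. borel) (lista_weight W1 W2) (lista_index L m n) \<and>
     (\<forall>k \<in> lista_index L m n.
        distributed M lborel (lista_weight W1 W2 k) (\<lambda>x. ennreal (std_normal_density x)))"

end

theory Submission
  imports Defs
begin

lemma normal_density_exp_sq:
  assumes "\<sigma> > 0" "q > 0" "q = 1 - 2 * s * \<sigma>\<^sup>2"
  shows "normal_density 0 \<sigma> x * exp (s * x\<^sup>2) = (1 / sqrt q) * normal_density 0 (\<sigma> / sqrt q) x"
proof -
  have a: "sqrt (2 * pi * (\<sigma> / sqrt q)\<^sup>2) = sqrt (2*pi*\<sigma>\<^sup>2) / sqrt q"
    using assms by (simp add: power_divide real_sqrt_divide)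
  have s_eq: "s = (1 - q) / (2 * \<sigma>\<^sup>2)" using assms by (simp add: field_simps)
  have b: "-(x - 0)\<^sup>2 / (2 * (\<sigma> / sqrt q)\<^sup>2) = -(x - 0)\<^sup>2 / (2 * \<sigma>\<^sup>2) + s * x\<^sup>2"
    using assms(1,2) unfolding s_eq by (simp add: power_divide field_simps)
  show ?thesis unfolding normal_density_def a b exp_add
    using assms by (simp add: field_simps)
qed

lemma gauss_mgf_sq:
  assumes P: "prob_space M" and K: "finite K"
    and ind: "prob_space.indep_vars M (\<lambda>_. borel) X K"
    and dist: "\<And>k. k \<in> K \<Longrightarrow> distributed M lborel (X k) (\<lambda>x. ennreal (std_normal_density x))"
    and s: "2 * s * (\<Sum>k\<in>K. (c k)\<^sup>2) < 1"
  shows "(\<integral>\<^sup>+\<omega>. ennreal (exp (s * (\<Sum>k\<in>K. c k * X k \<omega>)\<^sup>2)) \<partial>M)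
          = ennreal (1 / sqrt (1 - 2 * s * (\<Sum>k\<in>K. (c k)\<^sup>2)))"
proof -
  interpret prob_space M by fact
  define v where "v = (\<Sum>k\<in>K. (c k)\<^sup>2)"
  show ?thesis
  proof (cases "v = 0")
    case True
    then have "\<forall>k\<in>K. c k = 0" using K unfolding v_def
      by (subst (asm) sum_nonneg_eq_0_iff) auto
    then have "(\<Sum>k\<in>K. c k * X k \<omega>) = 0" for \<omega> by simp
    then show ?thesis using True unfolding v_def[symmetric]
      by (simp add: emeasure_space_1)
  next
    case False
    define K' where "K' = {k\<in>K. c k \<noteq> 0}"
    have K'ne: "K' \<noteq> {}" using False unfolding v_def K'_def by (auto intro: sum.neutral)
    have fK': "finite K'" using K unfolding K'_def by auto
    have sumeq: "(\<Sum>k\<in>K. c k * X k \<omega>) = (\<Sum>k\<in>K'. c k * X k \<omega>)" for \<omega>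
      unfolding K'_def by (rule sum.mono_neutral_right) (use K in auto)
    have veq: "v = (\<Sum>k\<in>K'. \<bar>c k\<bar>\<^sup>2)"
      unfolding v_def K'_def by (simp, rule sum.mono_neutral_right) (use K in auto)
    have vpos: "v > 0" using False unfolding v_def by (simp add: sum_nonneg order_le_neq_trans)
    have ind': "indep_vars (\<lambda>_. borel) (\<lambda>k \<omega>. c k * X k \<omega>) K'"
      by (rule indep_vars_compose2[where Y="\<lambda>k x. c k * x", OF indep_vars_subset[OF ind]])
         (auto simp: K'_def)
    have d: "distributed M lborel (\<lambda>\<omega>. c k * X k \<omega>) (normal_density 0 \<bar>c k\<bar>)" if "k \<in> K'" for k
      using normal_density_affine[OF dist[of k], of "c k" 0] that by (auto simp: K'_def)
    have D: "distributed M lborel (\<lambda>\<omega>. \<Sum>k\<in>K'. c k * X k \<omega>) (normal_density 0 (sqrt v))"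
      using sum_indep_normal[OF fK' K'ne ind', of "\<lambda>k. \<bar>c k\<bar>" "\<lambda>_. 0"] d
      unfolding veq by (auto simp: K'_def)
    define q where "q = 1 - 2 * s * v"
    have q: "q > 0" using s unfolding q_def v_def by simp
    have "(\<integral>\<^sup>+\<omega>. ennreal (exp (s * (\<Sum>k\<in>K. c k * X k \<omega>)\<^sup>2)) \<partial>M)
        = (\<integral>\<^sup>+x. ennreal (normal_density 0 (sqrt v) x) * ennreal (exp (s * x\<^sup>2)) \<partial>lborel)"
      unfolding sumeq by (rule distributed_nn_integral[OF D, symmetric]) simp
    also have "\<dots> = (\<integral>\<^sup>+x. ennreal (1 / sqrt q) * ennreal (normal_density 0 (sqrt v / sqrt q) x) \<partial>lborel)"
    proof (intro nn_integral_cong)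
      fix x
      have "normal_density 0 (sqrt v) x * exp (s * x\<^sup>2) = (1 / sqrt q) * normal_density 0 (sqrt v / sqrt q) x"
        using vpos q by (intro normal_density_exp_sq) (auto simp: q_def)
      then show "ennreal (normal_density 0 (sqrt v) x) * ennreal (exp (s * x\<^sup>2)) =
          ennreal (1 / sqrt q) * ennreal (normal_density 0 (sqrt v / sqrt q) x)"
        using q by (simp add: ennreal_mult'[symmetric] normal_density_nonneg)
    qed
    also have "\<dots> = ennreal (1 / sqrt q) * (\<integral>\<^sup>+x. ennreal (normal_density 0 (sqrt v / sqrt q) x) \<partial>lborel)"
      by (rule nn_integral_cmult) simp
    also have "(\<integral>\<^sup>+x. ennreal (normal_density 0 (sqrt v / sqrt q) x) \<partial>lborel) = 1"
      using vpos q by (subst nn_integral_eq_integral) (auto intro!: integrable_normal_density)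
    finally show ?thesis unfolding q_def v_def by simp
  qed
qed


lemma sigma_zero: "lista_sigma lam 0 = 0"
  by (simp add: lista_sigma_def)

lemma sigma_abs_le:
  assumes "lam \<ge> 0" shows "\<bar>lista_sigma lam x\<bar> \<le> \<bar>x\<bar>"
proof -
  have main: "0 \<le> lista_sigma lam x \<and> lista_sigma lam x \<le> x" if x: "x \<ge> 0" for x
  proof
    show "0 \<le> lista_sigma lam x" unfolding lista_sigma_def using x
      by (simp add: ln_le_cancel_iff add_pos_pos)
    have "1 + exp (x - lam) \<le> exp x * (1 + exp (- x - lam))"
    proof -
      have h: "(exp x - 1) * (exp lam - 1) \<ge> 0"
        using x assms by (intro mult_nonneg_nonneg) auto
      have e1: "exp (x - lam) = exp x / exp lam" and e2: "exp (- x - lam) = 1 / (exp x * exp lam)"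
        by (simp_all add: exp_diff exp_minus field_simps exp_add[symmetric])
      have h2: "exp lam + exp x \<le> 1 + exp lam * exp x" using h by (simp add: algebra_simps)
      have "exp lam * exp x * (exp lam + exp x) \<le> exp lam * exp x * (1 + exp lam * exp x)"
        using h2 by (intro mult_left_mono) auto
      then show ?thesis unfolding e1 e2 by (simp add: field_simps)
    qed
    then have "ln (1 + exp (x - lam)) \<le> ln (exp x * (1 + exp (- x - lam)))"
      by (simp add: add_pos_pos)
    also have "\<dots> = x + ln (1 + exp (- x - lam))"
    proof -
      have "1 + exp (- x - lam) > 0" by (smt (verit) exp_gt_zero)
      then show ?thesis by (subst ln_mult) auto
    qed
    finally show "lista_sigma lam x \<le> x" unfolding lista_sigma_def by simp
  qed
  have odd: "lista_sigma lam (- x) = - lista_sigma lam x" for x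
    unfolding lista_sigma_def by simp
  show ?thesis
  proof (cases "x \<ge> 0")
    case True then show ?thesis using main[of x] by simp
  next
    case False then show ?thesis using main[of "-x"] odd[of x] by simp
  qed
qed

lemma lista_x_cong:
  assumes "\<And>l' i j. 1 \<le> l' \<Longrightarrow> l' \<le> k \<Longrightarrow> i < m \<Longrightarrow> j < n \<Longrightarrow> W1 l' i j = W1' l' i j"
    and "\<And>l' i j. 1 \<le> l' \<Longrightarrow> l' \<le> k \<Longrightarrow> i < m \<Longrightarrow> j < m \<Longrightarrow> W2 l' i j = W2' l' i j"
    and "j < m"
  shows "lista_x lam m n y x0 W1 W2 k j = lista_x lam m n y x0 W1' W2' k j"
  using assms
proof (induction k arbitrary: j)
  case 0 then show ?case by simp
next
  case (Suc k)
  have IH: "lista_x lam m n y x0 W1 W2 k j' = lista_x lam m n y x0 W1' W2' k j'" if "j' < m" for j'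
    using Suc.prems that by (intro Suc.IH) auto
  show ?case using Suc.prems IH by (auto intro!: arg_cong[where f="lista_sigma lam"] sum.cong)
qed

lemma lista_x_measurable:
  assumes "\<And>l' i j. 1 \<le> l' \<Longrightarrow> l' \<le> k \<Longrightarrow> i < m \<Longrightarrow> j < n \<Longrightarrow> A l' i j \<in> borel_measurable N"
    and "\<And>l' i j. 1 \<le> l' \<Longrightarrow> l' \<le> k \<Longrightarrow> i < m \<Longrightarrow> j < m \<Longrightarrow> B l' i j \<in> borel_measurable N"
    and "j < m"
  shows "(\<lambda>\<omega>. lista_x lam m n y x0 (\<lambda>l i j. A l i j \<omega>) (\<lambda>l i j. B l i j \<omega>) k j) \<in> borel_measurable N"
  using assms
proof (induction k arbitrary: j)
  case 0 then show ?case by simp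
next
  case (Suc k)
  have IH: "(\<lambda>\<omega>. lista_x lam m n y x0 (\<lambda>l i j. A l i j \<omega>) (\<lambda>l i j. B l i j \<omega>) k j') \<in> borel_measurable N"
    if "j' < m" for j'
    using Suc.prems that by (intro Suc.IH) auto
  have sc: "lista_sigma lam \<in> borel_measurable borel"
    unfolding lista_sigma_def by (intro borel_measurable_continuous_onI continuous_intros) (auto simp: add_pos_pos, (smt (verit) exp_gt_zero)+)
  show ?case
    apply simp
    apply (rule measurable_compose[OF _ sc])
    using Suc.prems IH by (intro borel_measurable_add borel_measurable_times borel_measurable_const
        borel_measurable_sum) auto
qed


lemma sum_row:
  fixes n m :: nat
  shows "(\<Sum>\<kappa>\<in>((\<lambda>j. Inl (k,i,j)) ` {..<n} \<union> (\<lambda>j. Inr (k,i,j)) ` {..<m}). f \<kappa>)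
     = (\<Sum>j<n. f (Inl (k,i,j))) + (\<Sum>j<m. f (Inr (k,i,j)))"
  by (subst sum.union_disjoint) (auto simp: sum.reindex inj_on_def intro!: finite_imageI)

locale lista_setup =
  fixes M :: "'a measure" and L m n :: nat and y x0 :: "nat \<Rightarrow> real"
    and W1 W2 :: "nat \<Rightarrow> nat \<Rightarrow> nat \<Rightarrow> 'a \<Rightarrow> real" and lam :: real
  assumes init: "lista_init M L m n W1 W2" and lam: "lam \<ge> 0"
begin

sublocale prob_space M using init unfolding lista_init_def by auto

abbreviation "I \<equiv> lista_index L m n"
abbreviation "X \<equiv> lista_weight W1 W2"

lemma indep: "indep_vars (\<lambda>_. borel) X I"
  using init unfolding lista_init_def by auto

lemma distX: "\<kappa> \<in> I \<Longrightarrow> distributed M lborel (X \<kappa>) (\<lambda>x. ennreal (std_normal_density x))"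
  using init unfolding lista_init_def by auto

lemma measX: "\<kappa> \<in> I \<Longrightarrow> X \<kappa> \<in> borel_measurable M"
  using distributed_measurable[OF distX] by simp

lemma X_Inl[simp]: "X (Inl (l,i,j)) = W1 l i j" and X_Inr[simp]: "X (Inr (l,i,j)) = W2 l i j"
  by (simp_all add: lista_weight_def)

lemma mem_I_Inl[simp]: "Inl (l,i,j) \<in> I \<longleftrightarrow> 1 \<le> l \<and> l \<le> L \<and> i < m \<and> j < n"
  and mem_I_Inr[simp]: "Inr (l,i,j) \<in> I \<longleftrightarrow> 1 \<le> l \<and> l \<le> L \<and> i < m \<and> j < m"
  by (auto simp: lista_index_def)

lemma measW1: "1 \<le> l \<Longrightarrow> l \<le> L \<Longrightarrow> i < m \<Longrightarrow> j < n \<Longrightarrow> W1 l i j \<in> borel_measurable M"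
  using measX[of "Inl (l,i,j)"] by simp
lemma measW2: "1 \<le> l \<Longrightarrow> l \<le> L \<Longrightarrow> i < m \<Longrightarrow> j < m \<Longrightarrow> W2 l i j \<in> borel_measurable M"
  using measX[of "Inr (l,i,j)"] by simp

definition xx :: "nat \<Rightarrow> 'a \<Rightarrow> nat \<Rightarrow> real" where
  "xx k \<omega> = lista_x lam m n y x0 (\<lambda>l i j. W1 l i j \<omega>) (\<lambda>l i j. W2 l i j \<omega>) k"

definition zz :: "nat \<Rightarrow> nat \<Rightarrow> 'a \<Rightarrow> real" where
  "zz k i \<omega> = (1 / sqrt (real n)) * (\<Sum>j<n. W1 k i j \<omega> * y j)
       + (1 / sqrt (real m)) * (\<Sum>j<m. W2 k i j \<omega> * xx (k - 1) \<omega> j)"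

definition vv :: "nat \<Rightarrow> 'a \<Rightarrow> real" where
  "vv k \<omega> = (\<Sum>j<n. (y j / sqrt (real n))\<^sup>2) + (\<Sum>j<m. (xx (k - 1) \<omega> j / sqrt (real m))\<^sup>2)"

lemma xx_Suc: "xx (Suc k) \<omega> i = lista_sigma lam (zz (Suc k) i \<omega>)"
  unfolding xx_def zz_def by simp

lemma abs_xx_le: "1 \<le> k \<Longrightarrow> \<bar>xx k \<omega> i\<bar> \<le> \<bar>zz k i \<omega>\<bar>"
  using xx_Suc[of "k - 1" \<omega> i] sigma_abs_le[OF lam] by (cases k) auto

lemma meas_xx: "k \<le> L \<Longrightarrow> j < m \<Longrightarrow> (\<lambda>\<omega>. xx k \<omega> j) \<in> borel_measurable M"
  unfolding xx_def by (rule lista_x_measurable) (auto intro: measW1 measW2)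

lemma meas_zz: "1 \<le> k \<Longrightarrow> k \<le> L \<Longrightarrow> i < m \<Longrightarrow> zz k i \<in> borel_measurable M"
  unfolding zz_def
  by (intro borel_measurable_add borel_measurable_times borel_measurable_const borel_measurable_sum
      measW1 measW2 meas_xx) auto

lemma meas_vv: "1 \<le> k \<Longrightarrow> k \<le> L \<Longrightarrow> vv k \<in> borel_measurable M"
  unfolding vv_def
  by (intro borel_measurable_add borel_measurable_times borel_measurable_const borel_measurable_sum
      borel_measurable_power borel_measurable_divide meas_xx) auto

end


context lista_setup
begin

lemma core:
  assumes k: "1 \<le> k" "k \<le> L" and S: "S \<subseteq> {..<m}" and U: "U > 0"
  shows "(\<integral>\<^sup>+\<omega>. indicator {\<omega> \<in> space M. vv k \<omega> \<le> U} \<omega> *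
            ennreal (exp ((1 / (4 * U)) * (\<Sum>i\<in>S. (zz k i \<omega>)\<^sup>2))) \<partial>M) \<le> ennreal (sqrt 2 ^ card S)"
proof -
  define s where "s = 1 / (4 * U)"
  define Past where "Past = {\<kappa>\<in>I. case \<kappa> of Inl (l,i,j) \<Rightarrow> l < k | Inr (l,i,j) \<Rightarrow> l < k}"
  define Row where "Row i = (\<lambda>j. Inl (k,i,j)) ` {..<n} \<union> (\<lambda>j. Inr (k,i,j)) ` {..<m}" for i :: nat
  define R where "R = (\<Union>i\<in>{..<m}. Row i)"
  have PastI: "Past \<subseteq> I" unfolding Past_def by auto
  have RI: "R \<subseteq> I" unfolding R_def Row_def using k by auto
  have PR: "Past \<inter> R = {}" unfolding Past_def R_def Row_def by auto
  have RowR: "i < m \<Longrightarrow> Row i \<subseteq> R" for i unfolding R_def by auto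
  have RowI: "i < m \<Longrightarrow> Row i \<subseteq> I" for i using RowR RI by auto
  have disj: "disjoint_family_on Row S" unfolding disjoint_family_on_def Row_def by auto
  define PP where "PP = PiM Past (\<lambda>_. borel :: real measure)"
  define RR where "RR = PiM R (\<lambda>_. borel :: real measure)"
  define P where "P \<omega> = restrict (\<lambda>\<kappa>. X \<kappa> \<omega>) Past" for \<omega>
  define Y where "Y \<omega> = restrict (\<lambda>\<kappa>. X \<kappa> \<omega>) R" for \<omega>
  define F where "F p j = lista_x lam m n y x0 (\<lambda>l i j. p (Inl (l,i,j))) (\<lambda>l i j. p (Inr (l,i,j))) (k - 1) j"
    for p :: "(nat \<times> nat \<times> nat) + (nat \<times> nat \<times> nat) \<Rightarrow> real" and j
  define vp where "vp p = (\<Sum>j<n. (y j / sqrt (real n))\<^sup>2) + (\<Sum>j<m. (F p j / sqrt (real m))\<^sup>2)" for p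
  define \<zeta> where "\<zeta> p r i = (\<Sum>j<n. (y j / sqrt (real n)) * r (Inl (k,i,j)))
      + (\<Sum>j<m. (F p j / sqrt (real m)) * r (Inr (k,i,j)))"
    for p r :: "(nat \<times> nat \<times> nat) + (nat \<times> nat \<times> nat) \<Rightarrow> real" and i
  define g where "g pr = indicator {p. vp p \<le> U} (fst pr) *
      ennreal (exp (s * (\<Sum>i\<in>S. (\<zeta> (fst pr) (snd pr) i)\<^sup>2)))" for pr

  have FP: "F (P \<omega>) j = xx (k - 1) \<omega> j" if "j < m" for \<omega> j
    unfolding F_def xx_def
    by (rule lista_x_cong) (use that k in \<open>auto simp: P_def Past_def\<close>)
  have vpP: "vp (P \<omega>) = vv k \<omega>" for \<omega>
    unfolding vp_def vv_def by (simp add: FP)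
  have zetaP: "\<zeta> (P \<omega>) (Y \<omega>) i = zz k i \<omega>" if "i < m" for \<omega> i
  proof -
    have a: "(\<Sum>j<n. (y j / sqrt (real n)) * Y \<omega> (Inl (k,i,j))) = (1 / sqrt (real n)) * (\<Sum>j<n. W1 k i j \<omega> * y j)"
      unfolding sum_distrib_left
      by (intro sum.cong refl) (use that k in \<open>auto simp: Y_def R_def Row_def\<close>)
    have b: "(\<Sum>j<m. (F (P \<omega>) j / sqrt (real m)) * Y \<omega> (Inr (k,i,j))) = (1 / sqrt (real m)) * (\<Sum>j<m. W2 k i j \<omega> * xx (k - 1) \<omega> j)"
      unfolding sum_distrib_left
      by (intro sum.cong refl) (use that k in \<open>auto simp: Y_def R_def Row_def FP\<close>)
    show ?thesis unfolding \<zeta>_def zz_def a b ..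
  qed
  have measF: "(\<lambda>p. F p j) \<in> borel_measurable PP" if "j < m" for j
    unfolding F_def PP_def
    by (rule lista_x_measurable) (use that k in \<open>auto simp: Past_def intro!: measurable_component_singleton\<close>)
  have measvp: "vp \<in> borel_measurable PP"
    unfolding vp_def by (intro borel_measurable_add borel_measurable_sum borel_measurable_power
        borel_measurable_divide borel_measurable_const measF) auto
  have meas_zeta: "(\<lambda>pr. \<zeta> (fst pr) (snd pr) i) \<in> borel_measurable (PP \<Otimes>\<^sub>M RR)" if "i < m" for i
  proof -
    have a: "(\<lambda>pr. snd pr \<kappa>) \<in> borel_measurable (PP \<Otimes>\<^sub>M RR)" if "\<kappa> \<in> R" for \<kappa>
      by (rule measurable_compose[OF measurable_snd]) (use that in \<open>auto simp: RR_def intro!: measurable_component_singleton\<close>)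
    have b: "(\<lambda>pr. F (fst pr) j) \<in> borel_measurable (PP \<Otimes>\<^sub>M RR)" if "j < m" for j
      by (rule measurable_compose[OF measurable_fst measF[OF that]])
    show ?thesis unfolding \<zeta>_def
      by (intro borel_measurable_add borel_measurable_sum borel_measurable_times
        borel_measurable_divide borel_measurable_const a b) (use that k in \<open>auto simp: R_def Row_def\<close>)
  qed
  have measg: "g \<in> borel_measurable (PP \<Otimes>\<^sub>M RR)"
  proof -
    have vpm: "(\<lambda>pr. vp (fst pr)) \<in> borel_measurable (PP \<Otimes>\<^sub>M RR)"
      by (rule measurable_compose[OF measurable_fst measvp])
    have "{pr \<in> space (PP \<Otimes>\<^sub>M RR). vp (fst pr) \<le> U} \<in> sets (PP \<Otimes>\<^sub>M RR)"
      using borel_measurable_iff_le[THEN iffD1, OF vpm] by blast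
    then have "(\<lambda>pr. if vp (fst pr) \<le> U then 1 else 0 :: ennreal) \<in> borel_measurable (PP \<Otimes>\<^sub>M RR)"
      by (intro measurable_If) auto
    then have "(\<lambda>pr. indicator {p. vp p \<le> U} (fst pr) :: ennreal) \<in> borel_measurable (PP \<Otimes>\<^sub>M RR)"
      by (simp add: indicator_def of_bool_def)
    moreover have "(\<lambda>pr. ennreal (exp (s * (\<Sum>i\<in>S. (\<zeta> (fst pr) (snd pr) i)\<^sup>2)))) \<in> borel_measurable (PP \<Otimes>\<^sub>M RR)"
    proof -
      have "(\<lambda>pr. s * (\<Sum>i\<in>S. (\<zeta> (fst pr) (snd pr) i)\<^sup>2)) \<in> borel_measurable (PP \<Otimes>\<^sub>M RR)"
        using S by (intro borel_measurable_times borel_measurable_const borel_measurable_sum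
            borel_measurable_power meas_zeta) auto
      from measurable_compose[OF measurable_compose[OF this borel_measurable_exp] measurable_ennreal]
      show ?thesis by (simp add: o_def)
    qed
    ultimately show ?thesis unfolding g_def by (intro borel_measurable_times_ennreal)
  qed
  have ind: "indep_var PP P RR Y"
    unfolding PP_def RR_def P_def[abs_def] Y_def[abs_def]
    by (rule indep_var_restrict[OF indep PR PastI RI])
  have rvP: "random_variable PP P" and rvY: "random_variable RR Y"
    using ind by (auto dest: indep_var_rv1 indep_var_rv2)
  interpret DP: prob_space "distr M PP P" by (rule prob_space_distr[OF rvP])
  interpret DY: prob_space "distr M RR Y" by (rule prob_space_distr[OF rvY])
  have sets_eq: "sets (distr M PP P \<Otimes>\<^sub>M distr M RR Y) = sets (PP \<Otimes>\<^sub>M RR)"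
    by (intro sets_pair_measure_cong) auto

  have finS: "finite S" using S finite_subset by blast
  have inner: "(\<integral>\<^sup>+r. g (p, r) \<partial>distr M RR Y) \<le> ennreal (sqrt 2 ^ card S)" if p: "p \<in> space PP" for p
  proof -
    have mg: "(\<lambda>r. g (p, r)) \<in> borel_measurable RR" by (rule measurable_Pair2[OF measg p])
    have eq0: "(\<integral>\<^sup>+r. g (p,r) \<partial>distr M RR Y) = (\<integral>\<^sup>+\<omega>. g (p, Y \<omega>) \<partial>M)"
      by (rule nn_integral_distr[OF rvY]) (simp add: mg)
    show ?thesis
    proof (cases "vp p \<le> U")
      case False
      then have "g (p, r) = 0" for r unfolding g_def by simp
      then show ?thesis by simp
    next
      case True
      define q where "q = 1 - 2 * s * vp p"
      have vp0: "vp p \<ge> 0" unfolding vp_def by (intro add_nonneg_nonneg sum_nonneg) auto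
      have svp: "s * vp p \<le> 1 / 4" unfolding s_def using True U by (simp add: field_simps)
      have q: "q \<ge> 1 / 2" unfolding q_def using svp by simp
      define c where "c \<kappa> = (case \<kappa> of Inl (_,_,j) \<Rightarrow> y j / sqrt (real n) | Inr (_,_,j) \<Rightarrow> F p j / sqrt (real m))" for \<kappa> :: "(nat \<times> nat \<times> nat) + (nat \<times> nat \<times> nat)"
      have sumc: "(\<Sum>\<kappa>\<in>Row i. c \<kappa> * X \<kappa> \<omega>) = \<zeta> p (Y \<omega>) i" if "i \<in> S" for i \<omega>
        unfolding Row_def sum_row \<zeta>_def
        using that S k by (intro arg_cong2[where f="(+)"] sum.cong refl) (auto simp: c_def Y_def R_def Row_def)
      have sumc2: "(\<Sum>\<kappa>\<in>Row i. (c \<kappa>)\<^sup>2) = vp p" for i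
        unfolding Row_def sum_row vp_def c_def by simp
      have each: "(\<integral>\<^sup>+\<omega>. ennreal (exp (s * (\<zeta> p (Y \<omega>) i)\<^sup>2)) \<partial>M) = ennreal (1 / sqrt q)"
        if i: "i \<in> S" for i
      proof -
        have iI: "Row i \<subseteq> I" using RowI i S by auto
        have "(\<integral>\<^sup>+\<omega>. ennreal (exp (s * (\<Sum>\<kappa>\<in>Row i. c \<kappa> * X \<kappa> \<omega>)\<^sup>2)) \<partial>M)
            = ennreal (1 / sqrt (1 - 2 * s * (\<Sum>\<kappa>\<in>Row i. (c \<kappa>)\<^sup>2)))"
        proof (rule gauss_mgf_sq[OF prob_space_axioms])
          show "finite (Row i)" unfolding Row_def by auto
          show "indep_vars (\<lambda>_. borel) X (Row i)" by (rule indep_vars_subset[OF indep iI])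
          show "distributed M lborel (X k) (\<lambda>x. ennreal (std_normal_density x))" if "k \<in> Row i" for k
            using distX iI that by auto
          show "2 * s * (\<Sum>\<kappa>\<in>Row i. (c \<kappa>)\<^sup>2) < 1" unfolding sumc2 using svp by simp
        qed
        then show ?thesis by (simp add: sumc[OF i] sumc2 q_def)
      qed
      have rI: "indep_vars (\<lambda>i. PiM (Row i) (\<lambda>_. borel)) (\<lambda>i \<omega>. restrict (\<lambda>\<kappa>. X \<kappa> \<omega>) (Row i)) S"
        by (rule indep_vars_restrict[OF indep]) (use RowI S disj in auto)
      have mz: "(\<lambda>r. exp (s * (\<zeta> p r i)\<^sup>2)) \<in> borel_measurable (PiM (Row i) (\<lambda>_. borel))" if "i \<in> S" for i
      proof -
        have "(\<lambda>r. \<zeta> p r i) \<in> borel_measurable (PiM (Row i) (\<lambda>_. borel))"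
          unfolding \<zeta>_def
          by (intro borel_measurable_add borel_measurable_sum borel_measurable_times borel_measurable_const
              measurable_component_singleton) (auto simp: Row_def)
        then have "(\<lambda>r. s * (\<zeta> p r i)\<^sup>2) \<in> borel_measurable (PiM (Row i) (\<lambda>_. borel))"
          by (intro borel_measurable_times borel_measurable_const borel_measurable_power)
        from measurable_compose[OF this borel_measurable_exp] show ?thesis by (simp add: o_def)
      qed
      have indZ: "indep_vars (\<lambda>_. borel) (\<lambda>i \<omega>. exp (s * (\<zeta> p (Y \<omega>) i)\<^sup>2)) S"
      proof -
        have "indep_vars (\<lambda>_. borel) (\<lambda>i \<omega>. exp (s * (\<zeta> p (restrict (\<lambda>\<kappa>. X \<kappa> \<omega>) (Row i)) i)\<^sup>2)) S"
          by (rule indep_vars_compose2[OF rI mz])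
        moreover have "\<zeta> p (restrict (\<lambda>\<kappa>. X \<kappa> \<omega>) (Row i)) i = \<zeta> p (Y \<omega>) i" if "i \<in> S" for i \<omega>
          unfolding \<zeta>_def
          using that S k by (intro arg_cong2[where f="(+)"] sum.cong refl) (auto simp: Y_def R_def Row_def)
        ultimately show ?thesis by (subst indep_vars_cong[OF refl _ refl, where Y="\<lambda>i \<omega>. exp (s * (\<zeta> p (restrict (\<lambda>\<kappa>. X \<kappa> \<omega>) (Row i)) i)\<^sup>2)"]) auto
      qed
      have "(\<integral>\<^sup>+\<omega>. g (p, Y \<omega>) \<partial>M) = (\<integral>\<^sup>+\<omega>. ennreal (\<Prod>i\<in>S. exp (s * (\<zeta> p (Y \<omega>) i)\<^sup>2)) \<partial>M)"
        using True finS by (intro nn_integral_cong) (simp add: g_def sum_distrib_left exp_sum)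
      also have "\<dots> = (\<Prod>i\<in>S. \<integral>\<^sup>+\<omega>. ennreal (exp (s * (\<zeta> p (Y \<omega>) i)\<^sup>2)) \<partial>M)"
      proof -
        have indZ': "indep_vars (\<lambda>_. borel) (\<lambda>i \<omega>. ennreal (exp (s * (\<zeta> p (Y \<omega>) i)\<^sup>2))) S"
          by (rule indep_vars_compose2[OF indZ, where Y="\<lambda>_. ennreal"]) simp
        have "(\<integral>\<^sup>+\<omega>. ennreal (\<Prod>i\<in>S. exp (s * (\<zeta> p (Y \<omega>) i)\<^sup>2)) \<partial>M)
            = (\<integral>\<^sup>+\<omega>. (\<Prod>i\<in>S. ennreal (exp (s * (\<zeta> p (Y \<omega>) i)\<^sup>2))) \<partial>M)"
          by (intro nn_integral_cong) (simp add: prod_ennreal)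
        also have "\<dots> = (\<Prod>i\<in>S. \<integral>\<^sup>+\<omega>. ennreal (exp (s * (\<zeta> p (Y \<omega>) i)\<^sup>2)) \<partial>M)"
          by (rule indep_vars_nn_integral[OF finS indZ']) simp
        finally show ?thesis .
      qed
      also have "\<dots> = (\<Prod>i\<in>S. ennreal (1 / sqrt q))"
        by (rule prod.cong[OF refl each])
      also have "\<dots> = ennreal ((1 / sqrt q) ^ card S)"
        using q by (simp add: ennreal_power)
      also have "\<dots> \<le> ennreal (sqrt 2 ^ card S)"
      proof -
        have "1 / sqrt q \<le> sqrt 2"
        proof -
          have "1 \<le> sqrt 2 * sqrt q"
            using q by (simp add: real_sqrt_mult[symmetric])
          then show ?thesis using q by (simp add: field_simps)
        qed
        then show ?thesis using q by (intro ennreal_leI power_mono) auto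
      qed
      finally show ?thesis unfolding eq0 .
    qed
  qed

  have "(\<integral>\<^sup>+\<omega>. indicator {\<omega> \<in> space M. vv k \<omega> \<le> U} \<omega> *
            ennreal (exp ((1 / (4 * U)) * (\<Sum>i\<in>S. (zz k i \<omega>)\<^sup>2))) \<partial>M)
      = (\<integral>\<^sup>+\<omega>. g (P \<omega>, Y \<omega>) \<partial>M)"
  proof (intro nn_integral_cong)
    fix \<omega> assume \<omega>: "\<omega> \<in> space M"
    have 1: "(\<Sum>i\<in>S. (\<zeta> (P \<omega>) (Y \<omega>) i)\<^sup>2) = (\<Sum>i\<in>S. (zz k i \<omega>)\<^sup>2)"
      using S by (intro sum.cong refl) (auto simp: zetaP)
    have 2: "(indicator {p. vp p \<le> U} (P \<omega>) :: ennreal) = indicator {\<omega> \<in> space M. vv k \<omega> \<le> U} \<omega>"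
      using \<omega> by (simp add: indicator_def vpP)
    show "indicator {\<omega> \<in> space M. vv k \<omega> \<le> U} \<omega> *
            ennreal (exp ((1 / (4 * U)) * (\<Sum>i\<in>S. (zz k i \<omega>)\<^sup>2))) = g (P \<omega>, Y \<omega>)"
      unfolding g_def fst_conv snd_conv 1 2 s_def ..
  qed
  also have "\<dots> = (\<integral>\<^sup>+pr. g pr \<partial>distr M (PP \<Otimes>\<^sub>M RR) (\<lambda>\<omega>. (P \<omega>, Y \<omega>)))"
    by (rule nn_integral_distr[symmetric, OF measurable_Pair[OF rvP rvY]]) (simp add: measg)
  also have "\<dots> = (\<integral>\<^sup>+pr. g pr \<partial>(distr M PP P \<Otimes>\<^sub>M distr M RR Y))"
    using ind unfolding indep_var_distribution_eq by simp
  also have "\<dots> = (\<integral>\<^sup>+p. \<integral>\<^sup>+r. g (p, r) \<partial>distr M RR Y \<partial>distr M PP P)"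
    by (rule DY.nn_integral_fst[symmetric]) (subst measurable_cong_sets[OF sets_eq refl], rule measg)
  also have "\<dots> \<le> (\<integral>\<^sup>+p. ennreal (sqrt 2 ^ card S) \<partial>distr M PP P)"
    by (intro nn_integral_mono inner) auto
  also have "\<dots> = ennreal (sqrt 2 ^ card S)"
  proof -
    have "emeasure (distr M PP P) (space PP) = 1" using DP.emeasure_space_1 by simp
    then show ?thesis by simp
  qed
  finally show ?thesis .
qed

end

context lista_setup
begin

lemma tail:
  assumes k: "1 \<le> k" "k \<le> L" and S: "S \<subseteq> {..<m}" and U: "U > 0"
  shows "measure M {\<omega>\<in>space M. vv k \<omega> \<le> U \<and> a < (\<Sum>i\<in>S. (zz k i \<omega>)\<^sup>2)}
           \<le> sqrt 2 ^ card S * exp (- a / (4 * U))"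
proof -
  define h where "h \<omega> = (\<Sum>i\<in>S. (zz k i \<omega>)\<^sup>2)" for \<omega>
  have [measurable]: "h \<in> borel_measurable M"
    unfolding h_def using S k by (intro borel_measurable_sum borel_measurable_power meas_zz) auto
  have [measurable]: "vv k \<in> borel_measurable M" using meas_vv k by auto
  define A where "A = {\<omega>\<in>space M. vv k \<omega> \<le> U \<and> a < h \<omega>}"
  have Aset: "A \<in> sets M" unfolding A_def by measurable
  define c where "c = exp (a / (4 * U))"
  have c: "c > 0" unfolding c_def by simp
  have "(\<integral>\<^sup>+\<omega>. ennreal c * indicator A \<omega> \<partial>M)
      \<le> (\<integral>\<^sup>+\<omega>. indicator {\<omega> \<in> space M. vv k \<omega> \<le> U} \<omega> *
            ennreal (exp ((1 / (4 * U)) * (\<Sum>i\<in>S. (zz k i \<omega>)\<^sup>2))) \<partial>M)"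
  proof (intro nn_integral_mono)
    fix \<omega> assume \<omega>: "\<omega> \<in> space M"
    show "ennreal c * indicator A \<omega> \<le> indicator {\<omega> \<in> space M. vv k \<omega> \<le> U} \<omega> *
            ennreal (exp ((1 / (4 * U)) * (\<Sum>i\<in>S. (zz k i \<omega>)\<^sup>2)))"
    proof (cases "\<omega> \<in> A")
      case True
      then have "a / (4 * U) \<le> (1 / (4 * U)) * h \<omega>" using U unfolding A_def
        by (simp add: divide_right_mono)
      then have "c \<le> exp ((1 / (4 * U)) * h \<omega>)" unfolding c_def by simp
      then show ?thesis using True \<omega> unfolding A_def h_def by (simp add: ennreal_leI)
    next
      case False then show ?thesis by simp
    qed
  qed
  also have "\<dots> \<le> ennreal (sqrt 2 ^ card S)" by (rule core[OF k S U])
  finally have "ennreal c * emeasure M A \<le> ennreal (sqrt 2 ^ card S)"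
    using nn_integral_cmult_indicator[OF Aset] by simp
  then have "ennreal (c * measure M A) \<le> ennreal (sqrt 2 ^ card S)"
    using c by (simp add: emeasure_eq_measure ennreal_mult)
  then have "c * measure M A \<le> sqrt 2 ^ card S"
    by (subst (asm) ennreal_le_iff) auto
  then have "measure M A \<le> sqrt 2 ^ card S / c" using c by (simp add: field_simps)
  also have "\<dots> = sqrt 2 ^ card S * exp (- a / (4 * U))"
    unfolding c_def by (simp add: exp_minus field_simps)
  finally show ?thesis unfolding A_def h_def .
qed

end

lemma sq_le1: "\<bar>a\<bar> \<le> b \<Longrightarrow> a\<^sup>2 \<le> (b::real)\<^sup>2"
  using power_mono[of "\<bar>a\<bar>" b 2] by simp

lemma sq_le2: "\<bar>a\<bar> \<le> \<bar>b\<bar> \<Longrightarrow> a\<^sup>2 \<le> (b::real)\<^sup>2"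
  by (simp add: abs_le_square_iff)

fun Bc :: "real \<Rightarrow> real \<Rightarrow> nat \<Rightarrow> real" where
  "Bc Cy Cx 0 = Cx\<^sup>2"
| "Bc Cy Cx (Suc k) = 4 * (1 + Cy\<^sup>2 + Bc Cy Cx k)"

definition Uc :: "real \<Rightarrow> real \<Rightarrow> nat \<Rightarrow> real" where
  "Uc Cy Cx k = 1 + Cy\<^sup>2 + Bc Cy Cx (k - 1)"

lemma Bc_nonneg: "Bc Cy Cx k \<ge> 0"
  by (induction k) auto

lemma Uc_pos: "Uc Cy Cx k > 0"
  unfolding Uc_def using Bc_nonneg[of Cy Cx "k - 1"] by (smt (verit) zero_le_power2)

context lista_setup
begin

lemma vv_bound:
  assumes ybd: "\<forall>j<n. \<bar>y j\<bar> \<le> Cy" and m: "m \<ge> 1"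
  shows "vv k \<omega> \<le> Cy\<^sup>2 + (\<Sum>j<m. (xx (k - 1) \<omega> j)\<^sup>2) / real m"
proof -
  have 1: "(\<Sum>j<n. (y j / sqrt (real n))\<^sup>2) \<le> Cy\<^sup>2"
  proof (cases "n = 0")
    case True then show ?thesis by simp
  next
    case False
    have "(\<Sum>j<n. (y j / sqrt (real n))\<^sup>2) = (\<Sum>j<n. (y j)\<^sup>2) / real n"
      using False by (simp add: power_divide sum_divide_distrib)
    also have "\<dots> \<le> (\<Sum>j<n. Cy\<^sup>2) / real n"
      using ybd by (intro divide_right_mono sum_mono) (auto intro!: sq_le1)
    also have "\<dots> = Cy\<^sup>2" using False by simp
    finally show ?thesis .
  qed
  have 2: "(\<Sum>j<m. (xx (k - 1) \<omega> j / sqrt (real m))\<^sup>2) = (\<Sum>j<m. (xx (k - 1) \<omega> j)\<^sup>2) / real m"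
    using m by (simp add: power_divide sum_divide_distrib)
  show ?thesis unfolding vv_def 2 using 1 by simp
qed

definition Good :: "real \<Rightarrow> real \<Rightarrow> nat \<Rightarrow> 'a set" where
  "Good Cy Cx k = {\<omega>\<in>space M. (\<Sum>j<m. (xx k \<omega> j)\<^sup>2) \<le> Bc Cy Cx k * real m}"

lemma Good_sets: "k \<le> L \<Longrightarrow> Good Cy Cx k \<in> sets M"
proof -
  assume k: "k \<le> L"
  have [measurable]: "(\<lambda>\<omega>. \<Sum>j<m. (xx k \<omega> j)\<^sup>2) \<in> borel_measurable M"
    using k by (intro borel_measurable_sum borel_measurable_power meas_xx) auto
  show ?thesis unfolding Good_def by measurable
qed

lemma Good0:
  assumes xbd: "\<forall>j<m. \<bar>x0 j\<bar> \<le> Cx"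
  shows "Good Cy Cx 0 = space M"
proof -
  have "(\<Sum>j<m. (x0 j)\<^sup>2) \<le> (\<Sum>j<m. Cx\<^sup>2)"
    using xbd by (intro sum_mono) (auto intro!: sq_le1)
  then show ?thesis unfolding Good_def xx_def by (auto simp: mult.commute)
qed

lemma Good_step:
  assumes ybd: "\<forall>j<n. \<bar>y j\<bar> \<le> Cy" and m: "m \<ge> 1" and k: "1 \<le> k" "k \<le> L"
  shows "measure M (Good Cy Cx (k - 1) - Good Cy Cx k) \<le> exp (- real m / 2)"
proof -
  define U where "U = Uc Cy Cx k"
  have U: "U > 0" unfolding U_def by (rule Uc_pos)
  have BU: "Bc Cy Cx k = 4 * U" unfolding U_def Uc_def using k by (cases k) auto
  have sub: "Good Cy Cx (k - 1) - Good Cy Cx k \<subseteq>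
      {\<omega>\<in>space M. vv k \<omega> \<le> U \<and> 4 * U * real m < (\<Sum>i\<in>{..<m}. (zz k i \<omega>)\<^sup>2)}"
  proof
    fix \<omega> assume \<omega>: "\<omega> \<in> Good Cy Cx (k - 1) - Good Cy Cx k"
    then have sp: "\<omega> \<in> space M" unfolding Good_def by auto
    have "vv k \<omega> \<le> Cy\<^sup>2 + (\<Sum>j<m. (xx (k - 1) \<omega> j)\<^sup>2) / real m" by (rule vv_bound[OF ybd m])
    also have "\<dots> \<le> Cy\<^sup>2 + Bc Cy Cx (k - 1)"
      using \<omega> m unfolding Good_def by (simp add: divide_le_eq)
    also have "\<dots> \<le> U" unfolding U_def Uc_def by simp
    finally have 1: "vv k \<omega> \<le> U" .
    have "4 * U * real m < (\<Sum>j<m. (xx k \<omega> j)\<^sup>2)" using \<omega> sp unfolding Good_def BU by auto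
    also have "\<dots> \<le> (\<Sum>i<m. (zz k i \<omega>)\<^sup>2)"
      by (intro sum_mono) (use abs_xx_le[OF k(1)] in \<open>auto intro!: sq_le2\<close>)
    finally show "\<omega> \<in> {\<omega>\<in>space M. vv k \<omega> \<le> U \<and> 4 * U * real m < (\<Sum>i\<in>{..<m}. (zz k i \<omega>)\<^sup>2)}"
      using 1 sp by simp
  qed
  have "measure M (Good Cy Cx (k - 1) - Good Cy Cx k)
      \<le> measure M {\<omega>\<in>space M. vv k \<omega> \<le> U \<and> 4 * U * real m < (\<Sum>i\<in>{..<m}. (zz k i \<omega>)\<^sup>2)}"
  proof (rule finite_measure_mono[OF sub])
    have [measurable]: "(\<lambda>\<omega>. \<Sum>i\<in>{..<m}. (zz k i \<omega>)\<^sup>2) \<in> borel_measurable M"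
      using k by (intro borel_measurable_sum borel_measurable_power meas_zz) auto
    have [measurable]: "vv k \<in> borel_measurable M" using meas_vv k by auto
    show "{\<omega>\<in>space M. vv k \<omega> \<le> U \<and> 4 * U * real m < (\<Sum>i\<in>{..<m}. (zz k i \<omega>)\<^sup>2)} \<in> sets M"
      by measurable
  qed
  also have "\<dots> \<le> sqrt 2 ^ card {..<m} * exp (- (4 * U * real m) / (4 * U))"
    by (rule tail[OF k _ U]) auto
  also have "\<dots> = sqrt 2 ^ m * exp (- real m)" using U by simp
  also have "\<dots> \<le> exp (- real m / 2)"
  proof -
    have "sqrt 2 ^ m = exp (real m * ln (sqrt 2))"
      using exp_of_nat_mult[of m "ln (sqrt 2)"] by simp
    also have "\<dots> \<le> exp (real m / 2)"
    proof -
      have "ln (sqrt 2) \<le> 1 / 2"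
      proof -
        have "ln (sqrt 2) = ln 2 / 2" by (simp add: ln_sqrt)
        also have "\<dots> \<le> 1 / 2" using ln_2_less_1 by simp
        finally show ?thesis .
      qed
      then have "real m * ln (sqrt 2) \<le> real m * (1 / 2)" by (intro mult_left_mono) auto
      then show ?thesis by simp
    qed
    finally have "sqrt 2 ^ m * exp (- real m) \<le> exp (real m / 2) * exp (- real m)" by simp
    also have "\<dots> = exp (- real m / 2)" by (simp flip: exp_add)
    finally show ?thesis .
  qed
  finally show ?thesis .
qed

end

context lista_setup
begin

lemma Good_cover:
  assumes "\<omega> \<in> space M" and xbd: "\<forall>j<m. \<bar>x0 j\<bar> \<le> Cx"
  shows "\<omega> \<in> Good Cy Cx k \<or> (\<exists>k'\<in>{1..k}. \<omega> \<in> Good Cy Cx (k' - 1) - Good Cy Cx k')"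
proof (induction k)
  case 0 then show ?case using Good0[OF xbd] assms(1) by simp
next
  case (Suc k)
  then show ?case
  proof
    assume "\<omega> \<in> Good Cy Cx k"
    then show ?thesis by (cases "\<omega> \<in> Good Cy Cx (Suc k)") force+
  next
    assume "\<exists>k'\<in>{1..k}. \<omega> \<in> Good Cy Cx (k' - 1) - Good Cy Cx k'"
    then show ?thesis by force
  qed
qed

lemma final_bound:
  assumes ybd: "\<forall>j<n. \<bar>y j\<bar> \<le> Cy" and xbd: "\<forall>j<m. \<bar>x0 j\<bar> \<le> Cx" and m: "m \<ge> 1"
    and l: "1 \<le> l" "l \<le> L" and i: "i < m" and t: "t \<ge> 0"
  shows "measure M {\<omega>\<in>space M. t < \<bar>xx l \<omega> i\<bar>}
           \<le> real (l - 1) * exp (- real m / 2) + sqrt 2 * exp (- t\<^sup>2 / (4 * Uc Cy Cx l))"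
proof -
  define U where "U = Uc Cy Cx l"
  have U: "U > 0" unfolding U_def by (rule Uc_pos)
  define A where "A = (\<Union>k'\<in>{1..l - 1}. Good Cy Cx (k' - 1) - Good Cy Cx k')"
  define B where "B = {\<omega>\<in>space M. vv l \<omega> \<le> U \<and> t\<^sup>2 < (\<Sum>i'\<in>{i}. (zz l i' \<omega>)\<^sup>2)}"
  have [measurable]: "(\<lambda>\<omega>. \<Sum>i'\<in>{i}. (zz l i' \<omega>)\<^sup>2) \<in> borel_measurable M"
    using l i by (intro borel_measurable_sum borel_measurable_power meas_zz) auto
  have [measurable]: "vv l \<in> borel_measurable M" using meas_vv l by auto
  have Bsets: "B \<in> sets M" unfolding B_def by measurable
  have Asets: "A \<in> sets M" unfolding A_def using l
    by (intro sets.finite_UN sets.Diff Good_sets) auto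
  have sub: "{\<omega>\<in>space M. t < \<bar>xx l \<omega> i\<bar>} \<subseteq> A \<union> B"
  proof
    fix \<omega> assume \<omega>: "\<omega> \<in> {\<omega>\<in>space M. t < \<bar>xx l \<omega> i\<bar>}"
    then have sp: "\<omega> \<in> space M" and tx: "t < \<bar>xx l \<omega> i\<bar>" by auto
    from Good_cover[OF sp xbd, of Cy "l - 1"]
    show "\<omega> \<in> A \<union> B"
    proof
      assume G: "\<omega> \<in> Good Cy Cx (l - 1)"
      have "vv l \<omega> \<le> Cy\<^sup>2 + (\<Sum>j<m. (xx (l - 1) \<omega> j)\<^sup>2) / real m" by (rule vv_bound[OF ybd m])
      also have "\<dots> \<le> Cy\<^sup>2 + Bc Cy Cx (l - 1)"
        using G m unfolding Good_def by (simp add: divide_le_eq)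
      also have "\<dots> \<le> U" unfolding U_def Uc_def by simp
      finally have 1: "vv l \<omega> \<le> U" .
      have "t < \<bar>zz l i \<omega>\<bar>" using tx abs_xx_le[OF l(1), of \<omega> i] by simp
      then have "t\<^sup>2 < (zz l i \<omega>)\<^sup>2" using t
        by (metis abs_le_square_iff abs_of_nonneg less_le not_le power2_abs)
      then show ?thesis using 1 sp unfolding B_def by simp
    next
      assume "\<exists>k'\<in>{1..l - 1}. \<omega> \<in> Good Cy Cx (k' - 1) - Good Cy Cx k'"
      then show ?thesis unfolding A_def by blast
    qed
  qed
  have "measure M {\<omega>\<in>space M. t < \<bar>xx l \<omega> i\<bar>} \<le> measure M (A \<union> B)"
    by (rule finite_measure_mono[OF sub]) (use Asets Bsets in auto)
  also have "\<dots> \<le> measure M A + measure M B" by (rule measure_Un_le[OF Asets Bsets])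
  also have "measure M A \<le> (\<Sum>k'\<in>{1..l - 1}. measure M (Good Cy Cx (k' - 1) - Good Cy Cx k'))"
    unfolding A_def using l by (intro measure_UNION_le sets.Diff Good_sets) auto
  also have "\<dots> \<le> (\<Sum>k'\<in>{1..l - 1}. exp (- real m / 2))"
    using l by (intro sum_mono Good_step[OF ybd m]) auto
  also have "\<dots> = real (l - 1) * exp (- real m / 2)" by simp
  also have "measure M B \<le> sqrt 2 ^ card {i} * exp (- t\<^sup>2 / (4 * U))"
    unfolding B_def by (rule tail[OF l _ U]) (use i in auto)
  finally show ?thesis unfolding U_def by simp
qed

end

lemma exp_half_le_2: "exp (1/2::real) \<le> 2"
proof -
  have "exp (1/2::real)^2 = exp 1" by (simp flip: exp_of_nat_mult)
  also have "\<dots> \<le> 2^2" using exp_le by simp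
  finally show ?thesis by (rule power2_le_imp_le) simp
qed

lemma arith_final:
  fixes l :: nat and mm U c t P :: real
  assumes U: "U > 0" and m: "mm \<ge> 1" and t: "t = ln mm"
    and c: "c = 1 / (32 * (real l + 1)\<^sup>2 * (1 + 4 * U))"
    and P: "P \<le> real (l - 1) * exp (- mm / 2) + sqrt 2 * exp (- t\<^sup>2 / (4 * U))" and P1: "P \<le> 1"
  shows "P \<le> 2 * exp (- c * t\<^sup>2)"
proof -
  have l1: "(real l + 1)\<^sup>2 \<ge> 1" by simp
  have key: "b \<le> 32 * (real l + 1)\<^sup>2 * b" if "b \<ge> 0" for b
  proof -
    have "1 * b \<le> (32 * (real l + 1)\<^sup>2) * b" using l1 that by (intro mult_right_mono) linarith+
    then show ?thesis by simp
  qed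
  have D: "32 * (real l + 1)\<^sup>2 * (1 + 4 * U) > 0" using U by (simp add: add_pos_pos)
  have cpos: "c > 0" unfolding c using D by simp
  have c1: "c \<le> 1 / (4 * U)" unfolding c using U l1
  proof -
    have "4 * U \<le> 32 * (real l + 1)\<^sup>2 * (1 + 4 * U)"
    proof -
      have "4 * U \<le> 1 + 4 * U" by simp
      also have "\<dots> \<le> 32 * (real l + 1)\<^sup>2 * (1 + 4 * U)"
        using key[of "1 + 4 * U"] U by simp
      finally show ?thesis .
    qed
    then show "1 / (32 * (real l + 1)\<^sup>2 * (1 + 4 * U)) \<le> 1 / (4 * U)"
      using U by (intro divide_left_mono) auto
  qed
  have t0: "t \<ge> 0" unfolding t using m by simp
  show ?thesis
  proof (cases "c * t\<^sup>2 \<le> 1/2")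
    case True
    have e1: "exp (- (1/2)) \<le> exp (- c * t\<^sup>2)" using True by simp
    have e2: "1 / 2 \<le> exp (- (1/2::real))"
      using exp_half_le_2 by (simp add: exp_minus field_simps)
    show ?thesis using P1 e1 e2 by linarith
  next
    case False
    have "(4 * (real l + 1))\<^sup>2 = 16 * (real l + 1)\<^sup>2" by (simp only: power_mult_distrib) simp
    also have "\<dots> \<le> 16 * (real l + 1)\<^sup>2 * (1 + 4 * U)" using U by (simp add: mult_le_cancel_left1)
    also have "\<dots> = 1 / (2 * c)" unfolding c by simp
    also have "\<dots> < t\<^sup>2" using False cpos by (simp add: field_simps)
    finally have "(4 * (real l + 1))\<^sup>2 < t\<^sup>2" .
    then have "4 * (real l + 1) < t" using t0 by (simp add: power_less_imp_less_base)
    also have "t < mm" unfolding t using m by simp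
    finally have ml: "4 * (real l + 1) < mm" .
    have t2: "t\<^sup>2 \<le> 4 * mm"
    proof -
      have "ln mm = 2 * ln (sqrt mm)" using m by (simp add: ln_sqrt)
      also have "\<dots> \<le> 2 * (sqrt mm - 1)" using m ln_le_minus_one[of "sqrt mm"] by simp
      also have "\<dots> \<le> 2 * sqrt mm" by simp
      finally have "t \<le> 2 * sqrt mm" unfolding t .
      then have "t\<^sup>2 \<le> (2 * sqrt mm)\<^sup>2" using t0 by (intro power_mono) auto
      also have "\<dots> = 4 * mm" using m by (simp add: power_mult_distrib)
      finally show ?thesis .
    qed
    have c32: "c \<le> 1 / 32" unfolding c using l1 U
    proof -
      have "32 \<le> 32 * (real l + 1)\<^sup>2 * (1 + 4 * U)"
      proof -
        have "1 \<le> (real l + 1)\<^sup>2 * (1 + 4 * U)" using l1 U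
        proof -
          have "1 * 1 \<le> (real l + 1)\<^sup>2 * (1 + 4 * U)" using l1 U by (intro mult_mono) auto
          then show ?thesis by simp
        qed
        then show ?thesis by linarith
      qed
      then show "1 / (32 * (real l + 1)\<^sup>2 * (1 + 4 * U)) \<le> 1 / 32" by (intro divide_left_mono) auto
    qed
    have ct: "c * t\<^sup>2 \<le> mm / 8"
    proof -
      have "c * t\<^sup>2 \<le> (1/32) * (4 * mm)" using c32 t2 cpos by (intro mult_mono) auto
      then show ?thesis by simp
    qed
    have A: "real (l - 1) * exp (- mm / 2) \<le> (1/2) * exp (- c * t\<^sup>2)"
    proof -
      have "real (l - 1) \<le> exp (real (l - 1))" using exp_ge_add_one_self[of "real (l - 1)"] by linarith
      then have "real (l - 1) * exp (- mm / 2) \<le> exp (real (l - 1)) * exp (- mm / 2)"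
        by (intro mult_right_mono) auto
      also have "\<dots> = exp (real (l - 1) - 3 * mm / 8) * exp (- mm / 8)" by (simp flip: exp_add)
      also have "\<dots> \<le> exp (-1) * exp (- c * t\<^sup>2)"
      proof (intro mult_mono)
        have "real (l - 1) \<le> real l" by simp
        then show "exp (real (l - 1) - 3 * mm / 8) \<le> exp (- 1)" using ml by simp
        show "exp (- mm / 8) \<le> exp (- c * t\<^sup>2)" using ct by simp
      qed auto
      also have "exp (-1::real) \<le> 1/2"
      proof -
        have "2 \<le> exp (1::real)" using exp_ge_add_one_self[of 1] by simp
        then show ?thesis by (simp add: exp_minus field_simps)
      qed
      then have "exp (-1) * exp (- c * t\<^sup>2) \<le> (1/2) * exp (- c * t\<^sup>2)" by (intro mult_right_mono) auto
      finally show ?thesis .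
    qed
    have B: "sqrt 2 * exp (- t\<^sup>2 / (4 * U)) \<le> (3/2) * exp (- c * t\<^sup>2)"
    proof (intro mult_mono)
      show "sqrt 2 \<le> 3 / 2" by (rule real_le_lsqrt) (auto simp: power2_eq_square)
      have "c * t\<^sup>2 \<le> t\<^sup>2 / (4 * U)"
      proof -
        have "c * t\<^sup>2 \<le> (1 / (4 * U)) * t\<^sup>2" using c1 by (intro mult_right_mono) auto
        then show ?thesis by simp
      qed
      then show "exp (- t\<^sup>2 / (4 * U)) \<le> exp (- c * t\<^sup>2)" by simp
    qed auto
    show ?thesis using P A B by simp
  qed
qed


theorem lemma5:
  fixes lam C_y C_x :: real and l :: nat
  assumes "lam > 0"
  shows "\<exists>c > 0. \<forall>(M :: 'a measure) L m n y x0 W1 W2 i.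
     l \<in> {1..L} \<and> i < m \<and> lista_init M L m n W1 W2 \<and>
     (\<forall>j<n. \<bar>y j\<bar> \<le> C_y) \<and> (\<forall>j<m. \<bar>x0 j\<bar> \<le> C_x) \<longrightarrow>
     measure M {\<omega> \<in> space M.
        \<bar>lista_x lam m n y x0 (\<lambda>l i j. W1 l i j \<omega>) (\<lambda>l i j. W2 l i j \<omega>) l i\<bar>
          \<le> ln (real m) + \<bar>lista_sigma lam 0\<bar>}
       \<ge> 1 - 2 * exp (- c * (ln (real m))\<^sup>2)"
proof -
  define U where "U = Uc C_y C_x l"
  define c where "c = 1 / (32 * (real l + 1)\<^sup>2 * (1 + 4 * U))"
  have U: "U > 0" unfolding U_def by (rule Uc_pos)
  have cpos: "c > 0" unfolding c_def using U by (simp add: add_pos_pos)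
  have main: "measure M {\<omega> \<in> space M.
        \<bar>lista_x lam m n y x0 (\<lambda>l i j. W1 l i j \<omega>) (\<lambda>l i j. W2 l i j \<omega>) l i\<bar>
          \<le> ln (real m) + \<bar>lista_sigma lam 0\<bar>}
       \<ge> 1 - 2 * exp (- c * (ln (real m))\<^sup>2)"
    if H: "l \<in> {1..L} \<and> i < m \<and> lista_init M L m n W1 W2 \<and>
     (\<forall>j<n. \<bar>y j\<bar> \<le> C_y) \<and> (\<forall>j<m. \<bar>x0 j\<bar> \<le> C_x)"
    for M :: "'a measure" and L m n y x0 W1 W2 i
  proof -
    interpret lista_setup M L m n y x0 W1 W2 lam
      using H assms by unfold_locales auto
    have l: "1 \<le> l" "l \<le> L" and i: "i < m" and ybd: "\<forall>j<n. \<bar>y j\<bar> \<le> C_y"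
      and xbd: "\<forall>j<m. \<bar>x0 j\<bar> \<le> C_x" using H by auto
    have m: "m \<ge> 1" using i by simp
    define t where "t = ln (real m)"
    have t0: "t \<ge> 0" unfolding t_def using m by simp
    define A where "A = {\<omega>\<in>space M. t < \<bar>xx l \<omega> i\<bar>}"
    have [measurable]: "(\<lambda>\<omega>. xx l \<omega> i) \<in> borel_measurable M" using meas_xx l i by auto
    have Aset: "A \<in> sets M" unfolding A_def by measurable
    have seteq: "{\<omega> \<in> space M.
        \<bar>lista_x lam m n y x0 (\<lambda>l i j. W1 l i j \<omega>) (\<lambda>l i j. W2 l i j \<omega>) l i\<bar>
          \<le> ln (real m) + \<bar>lista_sigma lam 0\<bar>} = space M - A"
      unfolding A_def t_def sigma_zero xx_def by auto
    have PA: "measure M A \<le> real (l - 1) * exp (- real m / 2) + sqrt 2 * exp (- t\<^sup>2 / (4 * U))"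
      unfolding A_def U_def by (rule final_bound[OF ybd xbd m l i t0])
    have "measure M A \<le> 2 * exp (- c * t\<^sup>2)"
      by (rule arith_final[OF U _ _ c_def PA]) (use m t_def in auto)
    then show ?thesis unfolding seteq prob_compl[OF Aset] t_def by simp
  qed
  show ?thesis using cpos main by blast
qed


end
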